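(* Let $X$ be a compact metric space with metric $d$, let $f\colon X\to X$ be a continuous map with the s-limit shadowing property, let $C\in\mathcal{C}(f)$ and $D\in\mathcal{D}(C)$, and let $\mathcal{F},\mathcal{G}$ be full Furstenberg families. Let $n\ge2$ and $\delta>0$. If there is an $(\mathcal{F},\mathcal{G})$-$\delta$-scrambled $n$-tuple $(a_1,\dots,a_n)\in[V^s(D)]^n$ for $f$, then for every $0<r<\delta$, $V^s(D)$ is dense $(\mathcal{F},\mathcal{G})$-$n$-$r$-chaotic for $f$.
   Context: A $\delta$-chain of $f$ ($\delta>0$) is a finite sequence $(x_i)_{i=0}^k$, $k\ge1$, with $d(f(x_i),x_{i+1})\le\delta$ for $0\le i\le k-1$; it is a $\delta$-cycle if $x_0=x_k$, with length $k$. Write $x\to y$ if for every $\delta>0$ there is a $\delta$-chain from $x$ to $y$. Let $CR(f)=\{x\colon x\to x\}$; on $CR(f)$ let $x\leftrightarrow y$ iff $x\to y$ and $y\to x$; its classes are the chain components, forming $\mathcal{C}(f)$. For $C\in\mathcal{C}(f)$, $\delta>0$, let $m=m(C,\delta)$ be the gcd of the lengths of all $\delta$-cycles of $f|_C$, and for $x,y\in C$ let $x\sim_{C,\delta}y$ iff there is a $\delta$-chain of $f|_C$ from $x$ to $y$ of length divisible by $m$; $\mathcal{D}(C,\delta)$ is the set of its equivalence classes. Let $x\sim_C y$ iff $x\sim_{C,\delta}y$ for all $\delta>0$; $\mathcal{D}(C)$ is its set of classes. For $D\in\mathcal{D}(C)$, $D_\delta$ is the element of $\mathcal{D}(C,\delta)$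 containing $D$. $W^s(C)=\{x\colon\lim_i d(f^i(x),C)=0\}$ and $V^s(D)=\bigcap_{\delta>0}\{x\in W^s(C)\colon\lim_i d(f^i(x),f^i(D_\delta))=0\}$. $f$ has the s-limit shadowing property if for every $\epsilon>0$ there is $\delta>0$ such that for every sequence $(x_i)_{i\ge0}$ with $d(f(x_i),x_{i+1})\le\delta$ for all $i$ and $d(f(x_i),x_{i+1})\to0$ there is $x\in X$ with $d(f^i(x),x_i)\le\epsilon$ for all $i$ and $d(f^i(x),x_i)\to0$. A Furstenberg family is a nonempty proper family $\mathcal{F}\subsetneq 2^{\mathbb{N}_0}$ closed under taking supersets; it is full if $\{i\in A\colon i\ge n\}\in\mathcal{F}$ for all $A\in\mathcal{F}$, $n\ge0$. For $x_1,\dots,x_n\in X$, $r>0$: $S_f(x_1,\dots,x_n;r)=\{i\in\mathbb{N}_0\colon\min_{j<k}d(f^i(x_j),f^i(x_k))>r\}$ and $T_f(x_1,\dots,x_n;r)=\{i\in\mathbb{N}_0\colon\max_{j<k}d(f^i(x_j),f^i(x_k))<r\}$. $(x_1,\dots,x_n)$ is $(\mathcal{F},\mathcal{G})$-$\delta$-scrambled for $f$ if $S_f(x_1,\dots,x_n;\delta)\in\mathcal{F}$ and $T_f(x_1,\dots,x_n;\epsilon)\in\mathcal{G}$ for all $\epsilon>0$. A nonempty $Y\subset X$ is dense $(\mathcal{F},\mathcal{G})$-$n$-$\delta$-chaotic for $f$ if the set of $(\mathcal{F},\mathcal{G})$-$\delta$-scrambled $n$-tuples in $Y^n$ is dense in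 $Y^n$. *)

theory Defs
  imports "HOL-Analysis.Analysis"
begin

definition dchain :: "('a::metric_space \<Rightarrow> 'a) \<Rightarrow> real \<Rightarrow> (nat \<Rightarrow> 'a) \<Rightarrow> nat \<Rightarrow> bool" where
  "dchain f \<delta> \<xi> k \<longleftrightarrow> k \<ge> 1 \<and> (\<forall>i<k. dist (f (\<xi> i)) (\<xi> (Suc i)) \<le> \<delta>)"

definition chain_to :: "('a::metric_space \<Rightarrow> 'a) \<Rightarrow> 'a \<Rightarrow> 'a \<Rightarrow> bool" where
  "chain_to f x y \<longleftrightarrow> (\<forall>\<delta>>0. \<exists>\<xi> k. dchain f \<delta> \<xi> k \<and> \<xi> 0 = x \<and> \<xi> k = y)"

definition CR :: "('a::metric_space \<Rightarrow> 'a) \<Rightarrow> 'a set" where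
  "CR f = {x. chain_to f x x}"

definition chain_components :: "('a::metric_space \<Rightarrow> 'a) \<Rightarrow> 'a set set" where
  "chain_components f =
     {{y \<in> CR f. chain_to f x y \<and> chain_to f y x} | x. x \<in> CR f}"

definition dchain_on :: "('a::metric_space \<Rightarrow> 'a) \<Rightarrow> 'a set \<Rightarrow> real \<Rightarrow> (nat \<Rightarrow> 'a) \<Rightarrow> nat \<Rightarrow> bool" where
  "dchain_on f C \<delta> \<xi> k \<longleftrightarrow> dchain f \<delta> \<xi> k \<and> (\<forall>i\<le>k. \<xi> i \<in> C)"

definition period :: "('a::metric_space \<Rightarrow> 'a) \<Rightarrow> 'a set \<Rightarrow> real \<Rightarrow> nat" where
  "period f C \<delta> = Gcd {k. \<exists>\<xi>. dchain_on f C \<delta> \<xi> k \<and> \<xi> 0 = \<xi> k}"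

definition sim_delta :: "('a::metric_space \<Rightarrow> 'a) \<Rightarrow> 'a set \<Rightarrow> real \<Rightarrow> 'a \<Rightarrow> 'a \<Rightarrow> bool" where
  "sim_delta f C \<delta> x y \<longleftrightarrow> x \<in> C \<and> y \<in> C \<and>
     (\<exists>\<xi> k. dchain_on f C \<delta> \<xi> k \<and> \<xi> 0 = x \<and> \<xi> k = y \<and> period f C \<delta> dvd k)"

definition Dclasses_delta :: "('a::metric_space \<Rightarrow> 'a) \<Rightarrow> 'a set \<Rightarrow> real \<Rightarrow> 'a set set" where
  "Dclasses_delta f C \<delta> = {{y. sim_delta f C \<delta> x y} | x. x \<in> C}"

definition sim_C :: "('a::metric_space \<Rightarrow> 'a) \<Rightarrow> 'a set \<Rightarrow> 'a \<Rightarrow> 'a \<Rightarrow> bool" where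
  "sim_C f C x y \<longleftrightarrow> (\<forall>\<delta>>0. sim_delta f C \<delta> x y)"

definition Dclasses :: "('a::metric_space \<Rightarrow> 'a) \<Rightarrow> 'a set \<Rightarrow> 'a set set" where
  "Dclasses f C = {{y. sim_C f C x y} | x. x \<in> C}"

definition D_delta :: "('a::metric_space \<Rightarrow> 'a) \<Rightarrow> 'a set \<Rightarrow> real \<Rightarrow> 'a set \<Rightarrow> 'a set" where
  "D_delta f C \<delta> D = (THE E. E \<in> Dclasses_delta f C \<delta> \<and> D \<subseteq> E)"

definition Ws :: "('a::metric_space \<Rightarrow> 'a) \<Rightarrow> 'a set \<Rightarrow> 'a set" where
  "Ws f C = {x. (\<lambda>i. infdist ((f ^^ i) x) C) \<longlonglongrightarrow> 0}"

definition Vs :: "('a::metric_space \<Rightarrow> 'a) \<Rightarrow> 'a set \<Rightarrow> 'a set \<Rightarrow> 'a set" where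
  "Vs f C D = (\<Inter>\<delta>\<in>{\<delta>. \<delta> > 0}.
     {x \<in> Ws f C. (\<lambda>i. infdist ((f ^^ i) x) ((f ^^ i) ` D_delta f C \<delta> D)) \<longlonglongrightarrow> 0})"

definition s_limit_shadowing :: "('a::metric_space \<Rightarrow> 'a) \<Rightarrow> bool" where
  "s_limit_shadowing f \<longleftrightarrow>
    (\<forall>\<epsilon>>0. \<exists>\<delta>>0. \<forall>\<xi> :: nat \<Rightarrow> 'a.
       (\<forall>i. dist (f (\<xi> i)) (\<xi> (Suc i)) \<le> \<delta>) \<and>
       (\<lambda>i. dist (f (\<xi> i)) (\<xi> (Suc i))) \<longlonglongrightarrow> 0 \<longrightarrow>
       (\<exists>x. (\<forall>i. dist ((f ^^ i) x) (\<xi> i) \<le> \<epsilon>) \<and>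
            (\<lambda>i. dist ((f ^^ i) x) (\<xi> i)) \<longlonglongrightarrow> 0))"

definition furstenberg_family :: "nat set set \<Rightarrow> bool" where
  "furstenberg_family \<F> \<longleftrightarrow> \<F> \<noteq> {} \<and> \<F> \<noteq> UNIV \<and>
     (\<forall>A B. A \<in> \<F> \<and> A \<subseteq> B \<longrightarrow> B \<in> \<F>)"

definition full_family :: "nat set set \<Rightarrow> bool" where
  "full_family \<F> \<longleftrightarrow> furstenberg_family \<F> \<and> (\<forall>A\<in>\<F>. \<forall>n. {i \<in> A. i \<ge> n} \<in> \<F>)"

text \<open>An n-tuple is represented by a function x :: nat => 'a, using x 0, ..., x (n-1).\<close>
definition S_set :: "('a::metric_space \<Rightarrow> 'a) \<Rightarrow> nat \<Rightarrow> (nat \<Rightarrow> 'a) \<Rightarrow> real \<Rightarrow> nat set" where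
  "S_set f n x r = {i. \<forall>j k. j < k \<and> k < n \<longrightarrow> dist ((f ^^ i) (x j)) ((f ^^ i) (x k)) > r}"

definition T_set :: "('a::metric_space \<Rightarrow> 'a) \<Rightarrow> nat \<Rightarrow> (nat \<Rightarrow> 'a) \<Rightarrow> real \<Rightarrow> nat set" where
  "T_set f n x r = {i. \<forall>j k. j < k \<and> k < n \<longrightarrow> dist ((f ^^ i) (x j)) ((f ^^ i) (x k)) < r}"

definition scrambled :: "('a::metric_space \<Rightarrow> 'a) \<Rightarrow> nat set set \<Rightarrow> nat set set \<Rightarrow> nat \<Rightarrow> real \<Rightarrow> (nat \<Rightarrow> 'a) \<Rightarrow> bool" where
  "scrambled f \<F> \<G> n \<delta> x \<longleftrightarrow> S_set f n x \<delta> \<in> \<F> \<and> (\<forall>\<epsilon>>0. T_set f n x \<epsilon> \<in> \<G>)"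

text \<open>Density in Y^n (product topology, equivalently the max metric).\<close>
definition dense_chaotic :: "('a::metric_space \<Rightarrow> 'a) \<Rightarrow> nat set set \<Rightarrow> nat set set \<Rightarrow> nat \<Rightarrow> real \<Rightarrow> 'a set \<Rightarrow> bool" where
  "dense_chaotic f \<F> \<G> n \<delta> Y \<longleftrightarrow> Y \<noteq> {} \<and>
     (\<forall>y. (\<forall>j<n. y j \<in> Y) \<longrightarrow> (\<forall>\<epsilon>>0. \<exists>x. (\<forall>j<n. x j \<in> Y \<and> dist (x j) (y j) < \<epsilon>) \<and>
          scrambled f \<F> \<G> n \<delta> x))"

end

theory Submission
  imports Defs
begin


definition reach :: "('a::metric_space \<Rightarrow> 'a) \<Rightarrow> real \<Rightarrow> 'a \<Rightarrow> 'a \<Rightarrow> bool" where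
  "reach f d u w \<longleftrightarrow> (\<exists>\<xi> k. dchain f d \<xi> k \<and> \<xi> 0 = u \<and> \<xi> k = w)"

definition creach :: "('a::metric_space \<Rightarrow> 'a) \<Rightarrow> 'a set \<Rightarrow> real \<Rightarrow> 'a \<Rightarrow> 'a \<Rightarrow> nat \<Rightarrow> bool" where
  "creach f C d u w k \<longleftrightarrow> (\<exists>\<xi>. dchain_on f C d \<xi> k \<and> \<xi> 0 = u \<and> \<xi> k = w)"

lemma dchain_concat:
  assumes "dchain f d \<xi> k1" "dchain f d \<zeta> k2" "\<xi> k1 = \<zeta> 0"
  shows "dchain f d (\<lambda>i. if i \<le> k1 then \<xi> i else \<zeta> (i - k1)) (k1 + k2)"
  unfolding dchain_def
proof (intro conjI allI impI)
  show "1 \<le> k1 + k2" using assms(1) by (simp add: dchain_def)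
  fix i assume i: "i < k1 + k2"
  show "dist (f (if i \<le> k1 then \<xi> i else \<zeta> (i - k1))) (if Suc i \<le> k1 then \<xi> (Suc i) else \<zeta> (Suc i - k1)) \<le> d"
  proof (cases "i < k1")
    case True then show ?thesis using assms(1) by (simp add: dchain_def)
  next
    case False
    then have "Suc i - k1 = Suc (i - k1)" "i - k1 < k2" using i by auto
    show ?thesis
    proof (cases "i = k1")
      case True
      then show ?thesis using assms(2,3) unfolding dchain_def by auto
    next
      case F2: False
      then have "\<not> i \<le> k1" using False by simp
      then show ?thesis using assms(2) \<open>Suc i - k1 = Suc (i - k1)\<close> \<open>i - k1 < k2\<close> unfolding dchain_def by auto
    qed
  qed
qed

lemma creach_trans:
  assumes "creach f C d u v k1" "creach f C d v w k2"
  shows "creach f C d u w (k1 + k2)"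
proof -
  obtain \<xi> where x: "dchain_on f C d \<xi> k1" "\<xi> 0 = u" "\<xi> k1 = v" using assms(1) creach_def by metis
  obtain \<zeta> where z: "dchain_on f C d \<zeta> k2" "\<zeta> 0 = v" "\<zeta> k2 = w" using assms(2) creach_def by metis
  have k2: "k2 \<ge> 1" using z dchain_on_def dchain_def by metis
  have "dchain f d (\<lambda>i. if i \<le> k1 then \<xi> i else \<zeta> (i - k1)) (k1 + k2)"
    using dchain_concat x z dchain_on_def by metis
  moreover have "\<forall>i\<le>k1+k2. (if i \<le> k1 then \<xi> i else \<zeta> (i - k1)) \<in> C"
    using x(1) z(1) unfolding dchain_on_def by auto
  moreover have "(\<lambda>i. if i \<le> k1 then \<xi> i else \<zeta> (i - k1)) 0 = u" using x by simp
  moreover have "(\<lambda>i. if i \<le> k1 then \<xi> i else \<zeta> (i - k1)) (k1+k2) = w"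
  proof (cases "k2 = 0")
    case True then show ?thesis using k2 by simp
  next
    case False then show ?thesis using z by simp
  qed
  ultimately show ?thesis unfolding creach_def dchain_on_def by blast
qed

lemma reach_trans:
  assumes "reach f d u v" "reach f d v w"
  shows "reach f d u w"
proof -
  obtain \<xi> k1 where x: "dchain f d \<xi> k1" "\<xi> 0 = u" "\<xi> k1 = v" using assms(1) reach_def by metis
  obtain \<zeta> k2 where z: "dchain f d \<zeta> k2" "\<zeta> 0 = v" "\<zeta> k2 = w" using assms(2) reach_def by metis
  have k2: "k2 \<ge> 1" using z dchain_def by metis
  show ?thesis unfolding reach_def
    using dchain_concat[OF x(1) z(1)] x z k2
    by (intro exI[of _ "(\<lambda>i. if i \<le> k1 then \<xi> i else \<zeta> (i - k1))"] exI[of _ "k1+k2"]) auto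
qed

lemma chain_to_reach: "chain_to f u w \<longleftrightarrow> (\<forall>d>0. reach f d u w)"
  unfolding chain_to_def reach_def by auto

lemma chain_to_trans: "chain_to f u v \<Longrightarrow> chain_to f v w \<Longrightarrow> chain_to f u w"
  unfolding chain_to_reach using reach_trans by metis

lemma orbit_creach:
  assumes "\<forall>z\<in>C. f z \<in> C" "u \<in> C" "k \<ge> 1" "d \<ge> 0"
  shows "creach f C d u ((f ^^ k) u) k"
proof -
  have "\<forall>i. (f ^^ i) u \<in> C"
  proof
    fix i show "(f ^^ i) u \<in> C" using assms(1,2) by (induction i) auto
  qed
  then show ?thesis unfolding creach_def dchain_on_def dchain_def using assms(3,4)
    by (intro exI[of _ "\<lambda>i. (f ^^ i) u"]) auto
qed

lemma perturb:
  assumes "dchain f d \<xi> k" "\<forall>i\<le>k. dist (\<xi> i) (\<xi>' i) \<le> e"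
    "\<forall>a b. dist a b \<le> e \<longrightarrow> dist (f a) (f b) \<le> g"
  shows "dchain f (g + d + e) \<xi>' k"
  unfolding dchain_def
proof (intro conjI allI impI)
  show "1 \<le> k" using assms(1) dchain_def by metis
  fix i assume i: "i < k"
  have "dist (f (\<xi>' i)) (\<xi>' (Suc i)) \<le> dist (f (\<xi>' i)) (f (\<xi> i)) + dist (f (\<xi> i)) (\<xi> (Suc i)) + dist (\<xi> (Suc i)) (\<xi>' (Suc i))"
    using dist_triangle[of "f (\<xi>' i)" "\<xi>' (Suc i)" "f (\<xi> i)"] dist_triangle[of "f (\<xi> i)" "\<xi>' (Suc i)" "\<xi> (Suc i)"] by linarith
  moreover have "dist (f (\<xi>' i)) (f (\<xi> i)) \<le> g" using assms(2,3) i by (simp add: dist_commute)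
  moreover have "dist (f (\<xi> i)) (\<xi> (Suc i)) \<le> d" using assms(1) i dchain_def by metis
  moreover have "dist (\<xi> (Suc i)) (\<xi>' (Suc i)) \<le> e" using assms(2) i by simp
  ultimately show "dist (f (\<xi>' i)) (\<xi>' (Suc i)) \<le> g + d + e" by linarith
qed

lemma ucont:
  assumes "compact (UNIV :: 'a::metric_space set)" "continuous_on UNIV (f :: 'a \<Rightarrow> 'a)" "g > 0"
  shows "\<exists>e>0. \<forall>a b. dist a b \<le> e \<longrightarrow> dist (f a) (f b) \<le> g"
proof -
  have "uniformly_continuous_on UNIV f" using compact_uniformly_continuous assms by blast
  then obtain e where e: "e > 0" "\<forall>a b. dist a b < e \<longrightarrow> dist (f a) (f b) < g"
    unfolding uniformly_continuous_on_def using assms(3) by (metis UNIV_I)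
  show ?thesis
  proof (intro exI[of _ "e/2"] conjI allI impI)
    show "e/2 > 0" using e by simp
    fix a b :: 'a assume "dist a b \<le> e/2"
    then have "dist a b < e" using e by linarith
    then show "dist (f a) (f b) \<le> g" using e(2) less_imp_le by blast
  qed
qed



lemma dchain_mono: "dchain f d \<xi> k \<Longrightarrow> d \<le> d' \<Longrightarrow> dchain f d' \<xi> k"
  unfolding dchain_def by force

lemma reach_mono: "reach f d u w \<Longrightarrow> d \<le> d' \<Longrightarrow> reach f d' u w"
  unfolding reach_def using dchain_mono by metis

lemma comp_char:
  assumes "C \<in> chain_components f"
  obtains x where "x \<in> CR f" "C = {y \<in> CR f. chain_to f x y \<and> chain_to f y x}"
  using assms unfolding chain_components_def by blast

lemma comp_to:
  assumes "C \<in> chain_components f" "u \<in> C" "w \<in> C"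
  shows "chain_to f u w"
proof -
  obtain x where "C = {y \<in> CR f. chain_to f x y \<and> chain_to f y x}" using comp_char assms(1) by metis
  then show ?thesis using assms(2,3) chain_to_trans by blast
qed

lemma comp_in:
  assumes "C \<in> chain_components f" "u \<in> C" "chain_to f u z" "chain_to f z u"
  shows "z \<in> C"
proof -
  obtain x where x: "C = {y \<in> CR f. chain_to f x y \<and> chain_to f y x}" using comp_char assms(1) by metis
  have "z \<in> CR f" unfolding CR_def using assms(3,4) chain_to_trans by blast
  moreover have "chain_to f x z" using x assms(2,3) chain_to_trans by blast
  moreover have "chain_to f z x" using x assms(2,4) chain_to_trans by blast
  ultimately show ?thesis using x by blast
qed

lemma chain_to_step: "chain_to f u (f u)"
  unfolding chain_to_def dchain_def
  by (intro allI impI exI[of _ "\<lambda>i. (f ^^ i) u"] exI[of _ "1::nat"]) auto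

lemma fz_to_z:
  assumes "compact (UNIV :: 'a::metric_space set)" "continuous_on UNIV (f :: 'a \<Rightarrow> 'a)"
    "chain_to f z z"
  shows "chain_to f (f z) z"
  unfolding chain_to_reach
proof (intro allI impI)
  fix \<epsilon> :: real assume \<epsilon>: "\<epsilon> > 0"
  obtain e where e: "e > 0" "\<forall>a b. dist a b \<le> e \<longrightarrow> dist (f a) (f b) \<le> \<epsilon>/2"
    using ucont[OF assms(1,2), of "\<epsilon>/2"] \<epsilon> by auto
  define e' where "e' = min e (\<epsilon>/2)"
  have e': "e' > 0" using e \<epsilon> e'_def by simp
  obtain \<xi> k where x: "dchain f e' \<xi> k" "\<xi> 0 = z" "\<xi> k = z"
    using assms(3) e' unfolding chain_to_def by blast
  define \<zeta> where "\<zeta> = (\<lambda>i. if i \<le> k then \<xi> i else \<xi> (i - k))"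
  have zc: "dchain f e' \<zeta> (k + k)" using dchain_concat[OF x(1) x(1)] x unfolding \<zeta>_def by simp
  have k1: "k \<ge> 1" using x(1) dchain_def by metis
  have z0: "\<zeta> 0 = z" using x \<zeta>_def by simp
  have zk: "\<zeta> (k+k) = z" using x k1 \<zeta>_def by simp
  define \<zeta>' where "\<zeta>' = (\<lambda>i. if i = 0 then f z else \<zeta> (i + 1))"
  have "dchain f \<epsilon> \<zeta>' (k + k - 1)"
    unfolding dchain_def
  proof (intro conjI allI impI)
    show "1 \<le> k + k - 1" using k1 by simp
    fix i assume i: "i < k + k - 1"
    show "dist (f (\<zeta>' i)) (\<zeta>' (Suc i)) \<le> \<epsilon>"
    proof (cases "i = 0")
      case True
      have a: "dist (f z) (\<zeta> 1) \<le> e'" using zc z0 k1 unfolding dchain_def by force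
      have b0: "\<forall>i<k+k. dist (f (\<zeta> i)) (\<zeta> (Suc i)) \<le> e'" using zc unfolding dchain_def by simp
      have "(1::nat) < k + k" using k1 by simp
      then have b1: "dist (f (\<zeta> 1)) (\<zeta> (Suc 1)) \<le> e'" using b0 by blast
      have b: "dist (f (\<zeta> 1)) (\<zeta> 2) \<le> e'" using b1 by (simp add: numeral_2_eq_2)
      have c: "dist (f (f z)) (f (\<zeta> 1)) \<le> \<epsilon>/2" using e(2) a e'_def by simp
      have "dist (f (f z)) (\<zeta> 2) \<le> dist (f (f z)) (f (\<zeta> 1)) + dist (f (\<zeta> 1)) (\<zeta> 2)"
        by (rule dist_triangle)
      then have "dist (f (f z)) (\<zeta> 2) \<le> \<epsilon>" using b c e'_def by linarith
      moreover have "\<zeta>' 0 = f z" "\<zeta>' (Suc 0) = \<zeta> 2" by (simp_all add: \<zeta>'_def numeral_2_eq_2)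
      ultimately show ?thesis using True by simp
    next
      case False
      then have "dist (f (\<zeta> (Suc i))) (\<zeta> (Suc (Suc i))) \<le> e'" using zc i unfolding dchain_def by simp
      moreover have "e' \<le> \<epsilon>" using e'_def \<epsilon> by simp
      ultimately have "dist (f (\<zeta> (Suc i))) (\<zeta> (Suc (Suc i))) \<le> \<epsilon>" by linarith
      then show ?thesis using False \<zeta>'_def by simp
    qed
  qed
  moreover have "\<zeta>' 0 = f z" "\<zeta>' (k + k - 1) = z" using \<zeta>'_def zk k1 by auto
  ultimately show "reach f \<epsilon> (f z) z" unfolding reach_def by blast
qed

lemma comp_f_in:
  assumes "compact (UNIV :: 'a::metric_space set)" "continuous_on UNIV (f :: 'a \<Rightarrow> 'a)"
    "C \<in> chain_components f" "u \<in> C"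
  shows "f u \<in> C"
proof -
  have "chain_to f u u" using comp_to assms(3,4) by metis
  then have "chain_to f (f u) u" using fz_to_z assms(1,2) by metis
  then show ?thesis using comp_in[OF assms(3,4) chain_to_step] by metis
qed



lemma reach_perturb:
  assumes "\<forall>a b. dist a b \<le> e \<longrightarrow> dist (f a) (f b) \<le> g" "reach f d u w"
    "dist u u' \<le> e" "dist w w' \<le> e"
  shows "reach f (g + d + e) u' w'"
proof -
  obtain \<xi> k where x: "dchain f d \<xi> k" "\<xi> 0 = u" "\<xi> k = w" using assms(2) reach_def by metis
  have k: "k \<ge> 1" using x(1) dchain_def by metis
  define \<xi>' where "\<xi>' = \<xi>(0 := u', k := w')"
  have e0: "e \<ge> 0" using assms(3) zero_le_dist order_trans by metis
  have "\<forall>i\<le>k. dist (\<xi> i) (\<xi>' i) \<le> e" using x assms(3,4) e0 k unfolding \<xi>'_def by auto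
  then have "dchain f (g + d + e) \<xi>' k" using perturb[OF x(1) _ assms(1)] by blast
  moreover have "\<xi>' 0 = u'" "\<xi>' k = w'" using k unfolding \<xi>'_def by auto
  ultimately show ?thesis unfolding reach_def by blast
qed

lemma infdist_lessE:
  assumes "A \<noteq> {}" "infdist z A < e"
  shows "\<exists>c\<in>A. dist z c < e"
proof (rule ccontr)
  assume "\<not> ?thesis"
  then have "\<forall>c\<in>A. e \<le> dist z c" by auto
  then have "e \<le> infdist z A" unfolding infdist_notempty[OF assms(1)]
    using assms(1) by (intro cINF_greatest) auto
  then show False using assms(2) by simp
qed

lemma comp_close:
  assumes "compact (UNIV :: 'a::metric_space set)" "continuous_on UNIV (f :: 'a \<Rightarrow> 'a)"
    "C \<in> chain_components f" "u \<in> C" "\<eta> > 0"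
  shows "\<exists>d>0. \<forall>z. reach f d u z \<and> reach f d z u \<longrightarrow> infdist z C < \<eta>"
proof (rule ccontr)
  assume H: "\<not> ?thesis"
  have "\<forall>n::nat. \<exists>z. reach f (1/(real n+1)) u z \<and> reach f (1/(real n+1)) z u \<and> \<eta> \<le> infdist z C"
  proof
    fix n :: nat
    have "1/(real n+1) > 0" by simp
    then show "\<exists>z. reach f (1/(real n+1)) u z \<and> reach f (1/(real n+1)) z u \<and> \<eta> \<le> infdist z C"
      using H by (meson not_less)
  qed
  then obtain zs where zs: "\<forall>n. reach f (1/(real n+1)) u (zs n) \<and> reach f (1/(real n+1)) (zs n) u \<and> \<eta> \<le> infdist (zs n) C"
    by metis
  obtain l r where lr: "strict_mono (r :: nat \<Rightarrow> nat)" "(zs \<circ> r) \<longlonglongrightarrow> l"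
    using seq_compactE[OF compact_imp_seq_compact[OF assms(1)], of zs] by blast
  have key: "\<exists>n. 1/(real (r n)+1) \<le> \<epsilon> \<and> dist (zs (r n)) l \<le> \<epsilon>" if \<epsilon>: "\<epsilon> > 0" for \<epsilon>
  proof -
    obtain no where no: "\<forall>n\<ge>no. dist ((zs \<circ> r) n) l < \<epsilon>" using metric_LIMSEQ_D[OF lr(2) \<epsilon>] by blast
    obtain N where N: "inverse (real (Suc N)) < \<epsilon>" using reals_Archimedean[OF \<epsilon>] by blast
    define n where "n = max no N"
    have "N \<le> r n" using seq_suble[OF lr(1), of n] n_def by simp
    then have "1/(real (r n)+1) \<le> inverse (real (Suc N))"
      by (simp add: divide_simps)
    moreover have "dist (zs (r n)) l < \<epsilon>" using no n_def by simp
    ultimately show ?thesis using N by (intro exI[of _ n]) simp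
  qed
  have lim: "reach f \<epsilon> u l \<and> reach f \<epsilon> l u" if \<epsilon>: "\<epsilon> > 0" for \<epsilon>
  proof -
    obtain e where e: "e > 0" "\<forall>a b. dist a b \<le> e \<longrightarrow> dist (f a) (f b) \<le> \<epsilon>/3"
      using ucont[OF assms(1,2), of "\<epsilon>/3"] \<epsilon> by auto
    define e' where "e' = min e (\<epsilon>/3)"
    have e': "e' > 0" using e \<epsilon> e'_def by simp
    obtain n where n: "1/(real (r n)+1) \<le> e'" "dist (zs (r n)) l \<le> e'" using key[OF e'] by blast
    have e2: "\<forall>a b. dist a b \<le> e' \<longrightarrow> dist (f a) (f b) \<le> \<epsilon>/3" using e e'_def by auto
    have r1: "reach f (\<epsilon>/3 + 1/(real (r n)+1) + e') u l"
      using reach_perturb[OF e2, of "1/(real (r n)+1)" u "zs (r n)" u l] zs n less_imp_le[OF e'] by simp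
    have r2: "reach f (\<epsilon>/3 + 1/(real (r n)+1) + e') l u"
      using reach_perturb[OF e2, of "1/(real (r n)+1)" "zs (r n)" u l u] zs n less_imp_le[OF e'] by (simp add: dist_commute)
    have "e' \<le> \<epsilon>/3" using e'_def by simp
    then have "\<epsilon>/3 + 1/(real (r n)+1) + e' \<le> \<epsilon>" using n(1) by linarith
    then show ?thesis using r1 r2 reach_mono by metis
  qed
  have "l \<in> C" using comp_in[OF assms(3,4)] lim unfolding chain_to_reach by blast
  obtain n where n: "dist (zs (r n)) l \<le> \<eta>/2" using key[of "\<eta>/2"] assms(5) by auto
  have "infdist (zs (r n)) C \<le> dist (zs (r n)) l" using infdist_le[OF \<open>l \<in> C\<close>] by blast
  moreover have "\<eta> \<le> infdist (zs (r n)) C" using zs by blast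
  ultimately show False using n assms(5) by linarith
qed

lemma dchain_prefix:
  assumes "dchain f d \<xi> k" "0 < j" "j \<le> k"
  shows "dchain f d \<xi> j"
  using assms unfolding dchain_def by auto

lemma dchain_suffix:
  assumes "dchain f d \<xi> k" "j < k"
  shows "dchain f d (\<lambda>i. \<xi> (i + j)) (k - j)"
  using assms unfolding dchain_def by auto

lemma comp_creach:
  assumes "compact (UNIV :: 'a::metric_space set)" "continuous_on UNIV (f :: 'a \<Rightarrow> 'a)"
    "C \<in> chain_components f" "u \<in> C" "w \<in> C" "\<delta> > 0"
  shows "\<exists>k. creach f C \<delta> u w k"
proof -
  obtain e where e: "e > 0" "\<forall>a b. dist a b \<le> e \<longrightarrow> dist (f a) (f b) \<le> \<delta>/3"
    using ucont[OF assms(1,2), of "\<delta>/3"] assms(6) by auto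
  define \<eta> where "\<eta> = min e (\<delta>/3)"
  have \<eta>: "\<eta> > 0" using e assms(6) \<eta>_def by simp
  obtain d where d: "d > 0" "\<forall>z. reach f d u z \<and> reach f d z u \<longrightarrow> infdist z C < \<eta>"
    using comp_close[OF assms(1-4) \<eta>] by blast
  define d' where "d' = min d (\<delta>/3)"
  have d': "d' > 0" using d assms(6) d'_def by simp
  obtain \<xi> k where x: "dchain f d' \<xi> k" "\<xi> 0 = u" "\<xi> k = w"
    using comp_to[OF assms(3,4,5)] d' unfolding chain_to_def by blast
  have wu: "reach f d' w u" using comp_to[OF assms(3,5,4)] d' unfolding chain_to_reach by blast
  have k: "k \<ge> 1" using x(1) dchain_def by metis
  have Cne: "C \<noteq> {}" using assms(4) by blast
  have "\<forall>i. i \<le> k \<longrightarrow> (\<exists>c. c \<in> C \<and> dist (\<xi> i) c \<le> \<eta> \<and> (i = 0 \<longrightarrow> c = u) \<and> (i = k \<longrightarrow> c = w))"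
  proof (intro allI impI)
    fix i assume i: "i \<le> k"
    show "\<exists>c. c \<in> C \<and> dist (\<xi> i) c \<le> \<eta> \<and> (i = 0 \<longrightarrow> c = u) \<and> (i = k \<longrightarrow> c = w)"
    proof (cases "i = 0 \<or> i = k")
      case True
      then show ?thesis using x assms(4,5) \<eta> k by (intro exI[of _ "\<xi> i"]) auto
    next
      case False
      then have i0: "0 < i" "i < k" using i by auto
      have "reach f d' u (\<xi> i)" using dchain_prefix[OF x(1) i0(1)] i x(2) unfolding reach_def by blast
      moreover have "reach f d' (\<xi> i) w" using dchain_suffix[OF x(1) i0(2)] x(3) i0 unfolding reach_def
        by (intro exI[of _ "\<lambda>j. \<xi> (j + i)"] exI[of _ "k - i"]) auto
      ultimately have "reach f d u (\<xi> i) \<and> reach f d (\<xi> i) u"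
        using reach_trans wu reach_mono d'_def by (metis min.cobounded1)
      then have "infdist (\<xi> i) C < \<eta>" using d by blast
      then obtain c where "c \<in> C" "dist (\<xi> i) c < \<eta>" using infdist_lessE[OF Cne] by blast
      then show ?thesis using False by (intro exI[of _ c]) auto
    qed
  qed
  then obtain cs where cs: "\<forall>i. i \<le> k \<longrightarrow> cs i \<in> C \<and> dist (\<xi> i) (cs i) \<le> \<eta> \<and> (i = 0 \<longrightarrow> cs i = u) \<and> (i = k \<longrightarrow> cs i = w)"
    by metis
  have e2: "\<forall>a b. dist a b \<le> \<eta> \<longrightarrow> dist (f a) (f b) \<le> \<delta>/3" using e \<eta>_def by auto
  have "dchain f (\<delta>/3 + d' + \<eta>) cs k" using perturb[OF x(1) _ e2] cs by blast
  moreover have "d' \<le> \<delta>/3" "\<eta> \<le> \<delta>/3" by (simp_all add: d'_def \<eta>_def)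
  ultimately have "dchain f \<delta> cs k" using dchain_mono[of f "\<delta>/3 + d' + \<eta>" cs k \<delta>] by linarith
  then have "creach f C \<delta> u w k" unfolding creach_def dchain_on_def using cs
    by (intro exI[of _ cs]) auto
  then show ?thesis by blast
qed



definition K where
  "K f C \<longleftrightarrow> compact (UNIV :: 'a::metric_space set) \<and> continuous_on UNIV (f :: 'a \<Rightarrow> 'a) \<and> C \<in> chain_components f"

lemma creach_pos: "creach f C d u w k \<Longrightarrow> k \<ge> 1"
  unfolding creach_def dchain_on_def dchain_def by blast

lemma creach_in: "creach f C d u w k \<Longrightarrow> u \<in> C \<and> w \<in> C"
proof -
  assume "creach f C d u w k"
  then obtain \<xi> where x: "\<forall>i\<le>k. \<xi> i \<in> C" "\<xi> 0 = u" "\<xi> k = w" unfolding creach_def dchain_on_def by blast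
  have "\<xi> 0 \<in> C" "\<xi> k \<in> C" using x(1) by simp_all
  then show ?thesis using x by simp
qed

lemma period_dvd: "creach f C d u u k \<Longrightarrow> period f C d dvd k"
  unfolding period_def creach_def by (rule Gcd_dvd) auto

lemma K_creach: "K f C \<Longrightarrow> u \<in> C \<Longrightarrow> w \<in> C \<Longrightarrow> d > 0 \<Longrightarrow> \<exists>k. creach f C d u w k"
  unfolding K_def by (elim conjE, rule comp_creach)

lemma K_fin: "K f C \<Longrightarrow> u \<in> C \<Longrightarrow> f u \<in> C"
  unfolding K_def by (elim conjE, rule comp_f_in)

lemma period_pos:
  assumes "K f C" "u \<in> C" "d > 0"
  shows "period f C d > 0"
proof -
  obtain k where "creach f C d u u k" using K_creach[OF assms(1,2,2,3)] by blast
  then have "period f C d dvd k" "k \<ge> 1" using period_dvd creach_pos by blast+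
  then show ?thesis by (cases "period f C d = 0") auto
qed

lemma sim_iff: "sim_delta f C d u w \<longleftrightarrow> u \<in> C \<and> w \<in> C \<and> (\<exists>k. creach f C d u w k \<and> period f C d dvd k)"
  unfolding sim_delta_def creach_def by blast

lemma sim_len:
  assumes "K f C" "d > 0" "sim_delta f C d u w" "creach f C d u w k"
  shows "period f C d dvd k"
proof -
  obtain k0 where k0: "creach f C d u w k0" "period f C d dvd k0" using assms(3) unfolding sim_iff by blast
  have uw: "u \<in> C" "w \<in> C" using assms(3) unfolding sim_iff by blast+
  obtain b where b: "creach f C d w u b" using K_creach[OF assms(1) uw(2,1) assms(2)] by blast
  have "period f C d dvd k0 + b" using period_dvd creach_trans[OF k0(1) b] by blast
  then have "period f C d dvd b" using k0(2) by (simp add: dvd_add_right_iff)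
  moreover have "period f C d dvd k + b" using period_dvd creach_trans[OF assms(4) b] by blast
  ultimately show ?thesis by (simp add: dvd_add_left_iff)
qed

lemma sim_refl: "K f C \<Longrightarrow> d > 0 \<Longrightarrow> u \<in> C \<Longrightarrow> sim_delta f C d u u"
proof -
  assume a: "K f C" "d > 0" "u \<in> C"
  obtain k where "creach f C d u u k" using K_creach[OF a(1,3,3,2)] by blast
  then show ?thesis using period_dvd a(3) unfolding sim_iff by blast
qed

lemma sim_sym:
  assumes "K f C" "d > 0" "sim_delta f C d u w" shows "sim_delta f C d w u"
proof -
  obtain k0 where k0: "creach f C d u w k0" "period f C d dvd k0" using assms(3) unfolding sim_iff by blast
  have uw: "u \<in> C" "w \<in> C" using assms(3) unfolding sim_iff by blast+
  obtain b where b: "creach f C d w u b" using K_creach[OF assms(1) uw(2,1) assms(2)] by blast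
  have "period f C d dvd k0 + b" using period_dvd creach_trans[OF k0(1) b] by blast
  then have "period f C d dvd b" using k0(2) by (simp add: dvd_add_right_iff)
  moreover have "u \<in> C" "w \<in> C" using assms(3) unfolding sim_iff by blast+
  ultimately show ?thesis using b unfolding sim_iff by blast
qed

lemma sim_trans:
  assumes "sim_delta f C d u v" "sim_delta f C d v w" shows "sim_delta f C d u w"
proof -
  obtain k1 where k1: "creach f C d u v k1" "period f C d dvd k1" using assms(1) unfolding sim_iff by blast
  obtain k2 where k2: "creach f C d v w k2" "period f C d dvd k2" using assms(2) unfolding sim_iff by blast
  have "period f C d dvd k1 + k2" using k1(2) k2(2) by simp
  moreover have "u \<in> C" "w \<in> C" using assms unfolding sim_iff by blast+
  ultimately show ?thesis using creach_trans[OF k1(1) k2(1)] unfolding sim_iff by blast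
qed

lemma sim_f:
  assumes "K f C" "d > 0" "sim_delta f C d u w" shows "sim_delta f C d (f u) (f w)"
proof -
  have uC: "u \<in> C" "w \<in> C" using assms(3) unfolding sim_iff by blast+
  have fC: "\<forall>z\<in>C. f z \<in> C" using K_fin assms(1) by blast
  obtain k0 where k0: "creach f C d u w k0" "period f C d dvd k0" using assms(3) unfolding sim_iff by blast
  obtain l where l: "creach f C d (f u) u l" using K_creach[OF assms(1) K_fin[OF assms(1) uC(1)] uC(1) assms(2)] by blast
  have o1: "creach f C d u (f u) 1" using orbit_creach[OF fC uC(1), of 1 d] assms(2) by simp
  have o2: "creach f C d w (f w) 1" using orbit_creach[OF fC uC(2), of 1 d] assms(2) by simp
  have p1: "period f C d dvd l + 1" using period_dvd creach_trans[OF l o1] by blast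
  have c: "creach f C d (f u) (f w) (l + k0 + 1)" using creach_trans[OF creach_trans[OF l k0(1)] o2] by simp
  have "period f C d dvd (l + 1) + k0" using p1 k0(2) by (rule dvd_add)
  then have "period f C d dvd l + k0 + 1" by (simp add: ac_simps)
  moreover have "f u \<in> C" "f w \<in> C" using fC uC by blast+
  ultimately show ?thesis using c unfolding sim_iff by blast
qed

lemma sim_fn:
  assumes "K f C" "d > 0" "sim_delta f C d u w" shows "sim_delta f C d ((f ^^ i) u) ((f ^^ i) w)"
  using assms(3) by (induction i) (auto intro: sim_f[OF assms(1,2)])

lemma sim_orbit:
  assumes "K f C" "d > 0" "u \<in> C" "period f C d dvd L"
  shows "sim_delta f C d u ((f ^^ L) u)"
proof (cases "L = 0")
  case True then show ?thesis using sim_refl assms by simp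
next
  case False
  have fC: "\<forall>z\<in>C. f z \<in> C" using K_fin assms(1) by blast
  have "creach f C d u ((f ^^ L) u) L" using orbit_creach[OF fC assms(3), of L d] False assms(2) by simp
  moreover have "(f ^^ L) u \<in> C" using creach_in calculation by blast
  ultimately show ?thesis using assms(3,4) unfolding sim_iff by blast
qed

lemma Ddelta_eq:
  assumes "K f C" "D \<in> Dclasses f C"
  obtains x0 where "x0 \<in> C" "x0 \<in> D" "\<And>d. d > 0 \<Longrightarrow> D_delta f C d D = {y. sim_delta f C d x0 y}"
proof -
  obtain x0 where x0: "x0 \<in> C" "D = {y. sim_C f C x0 y}" using assms(2) unfolding Dclasses_def by blast
  have "sim_C f C x0 x0" unfolding sim_C_def using sim_refl[OF assms(1) _ x0(1)] by blast
  then have x0D: "x0 \<in> D" using x0(2) by simp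
  have "D_delta f C d D = {y. sim_delta f C d x0 y}" if d: "d > 0" for d
    unfolding D_delta_def
  proof (rule the_equality)
    have "{y. sim_delta f C d x0 y} \<in> Dclasses_delta f C d"
      using x0(1) unfolding Dclasses_delta_def by blast
    moreover have "D \<subseteq> {y. sim_delta f C d x0 y}"
    proof
      fix y assume "y \<in> D"
      then have "sim_C f C x0 y" using x0(2) by simp
      then show "y \<in> {y. sim_delta f C d x0 y}" using d unfolding sim_C_def by simp
    qed
    ultimately show "{y. sim_delta f C d x0 y} \<in> Dclasses_delta f C d \<and> D \<subseteq> {y. sim_delta f C d x0 y}"
      by blast
  next
    fix E assume E: "E \<in> Dclasses_delta f C d \<and> D \<subseteq> E"
    then obtain x' where x': "x' \<in> C" "E = {y. sim_delta f C d x' y}" unfolding Dclasses_delta_def by blast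
    have s: "sim_delta f C d x' x0" using E x' x0D by blast
    have s2: "sim_delta f C d x0 x'" using sim_sym[OF assms(1) d s] .
    show "E = {y. sim_delta f C d x0 y}"
    proof (rule set_eqI)
      fix y
      have "sim_delta f C d x' y \<Longrightarrow> sim_delta f C d x0 y" using sim_trans[OF s2] by blast
      moreover have "sim_delta f C d x0 y \<Longrightarrow> sim_delta f C d x' y" using sim_trans[OF s] by blast
      ultimately show "y \<in> E \<longleftrightarrow> y \<in> {y. sim_delta f C d x0 y}" using x'(2) by blast
    qed
  qed
  then show ?thesis using that x0 x0D by blast
qed



lemma creach_perturb:
  assumes "\<forall>a b. dist a b \<le> e \<longrightarrow> dist (f a) (f b) \<le> g" "creach f C d u w k"
    "dist u u' \<le> e" "dist w w' \<le> e" "u' \<in> C" "w' \<in> C"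
  shows "creach f C (g + d + e) u' w' k"
proof -
  obtain \<xi> where x: "dchain f d \<xi> k" "\<forall>i\<le>k. \<xi> i \<in> C" "\<xi> 0 = u" "\<xi> k = w"
    using assms(2) unfolding creach_def dchain_on_def by blast
  have k: "k \<ge> 1" using x(1) dchain_def by metis
  define \<xi>' where "\<xi>' = \<xi>(0 := u', k := w')"
  have e0: "e \<ge> 0" using assms(3) zero_le_dist order_trans by metis
  have "\<forall>i\<le>k. dist (\<xi> i) (\<xi>' i) \<le> e" using x assms(3,4) e0 k unfolding \<xi>'_def by auto
  then have "dchain f (g + d + e) \<xi>' k" using perturb[OF x(1) _ assms(1)] by blast
  moreover have "\<forall>i\<le>k. \<xi>' i \<in> C" using x(2) assms(5,6) unfolding \<xi>'_def by auto
  moreover have "\<xi>' 0 = u'" "\<xi>' k = w'" using k unfolding \<xi>'_def by auto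
  ultimately show ?thesis unfolding creach_def dchain_on_def by blast
qed

lemma creach_mono: "creach f C d u w k \<Longrightarrow> d \<le> d' \<Longrightarrow> creach f C d' u w k"
  unfolding creach_def dchain_on_def using dchain_mono by blast

lemma uniform_bound:
  assumes "K f C" "d > 0"
  shows "\<exists>M. \<forall>u\<in>C. \<forall>w\<in>C. \<exists>k. k \<le> M \<and> creach f C d u w k"
proof -
  have cpt: "compact (UNIV :: 'a set)" and cont: "continuous_on UNIV f" using assms(1) K_def by blast+
  obtain e where e: "e > 0" "\<forall>a b. dist a b \<le> e \<longrightarrow> dist (f a) (f b) \<le> d/3"
    using ucont[OF cpt cont, of "d/3"] assms(2) by auto
  define \<eta> where "\<eta> = min e (d/3)"
  have \<eta>: "\<eta> > 0" using e assms(2) \<eta>_def by simp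
  obtain N0 where N0: "finite N0" "(UNIV :: 'a set) \<subseteq> (\<Union>x\<in>N0. ball x (\<eta>/2))"
  proof -
    have "\<eta>/2 > 0" using \<eta> by simp
    then show ?thesis using seq_compact_imp_totally_bounded[OF compact_imp_seq_compact[OF cpt]] that by blast
  qed
  define N where "N = {z \<in> N0. \<exists>c\<in>C. dist z c < \<eta>/2}"
  have "\<forall>z\<in>N. \<exists>c. c \<in> C \<and> dist z c < \<eta>/2" unfolding N_def by blast
  from bchoice[OF this] obtain cc where cc: "\<forall>z\<in>N. cc z \<in> C \<and> dist z (cc z) < \<eta>/2" by blast
  define Net where "Net = cc ` N"
  have "finite N" using N0(1) unfolding N_def by simp
  then have Netf: "finite Net" unfolding Net_def by (rule finite_imageI)
  have NetC: "Net \<subseteq> C" using cc unfolding Net_def by blast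
  have near: "\<exists>p\<in>Net. dist p u \<le> \<eta>" if u: "u \<in> C" for u
  proof -
    have "u \<in> (\<Union>x\<in>N0. ball x (\<eta>/2))" using N0(2) by blast
    then obtain z where z0: "z \<in> N0" "u \<in> ball z (\<eta>/2)" by blast
    then have z: "z \<in> N0" "dist z u < \<eta>/2" by auto
    then have zN: "z \<in> N" unfolding N_def using u by blast
    have "dist (cc z) u \<le> dist (cc z) z + dist z u" by (rule dist_triangle)
    moreover have "dist (cc z) z < \<eta>/2" using cc zN by (simp add: dist_commute)
    ultimately have "dist (cc z) u \<le> \<eta>" using z(2) by linarith
    then show ?thesis using zN unfolding Net_def by blast
  qed
  define len where "len = (\<lambda>p q. SOME k. creach f C (d/3) p q k)"
  have len: "creach f C (d/3) p q (len p q)" if "p \<in> Net" "q \<in> Net" for p q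
  proof -
    have "p \<in> C" "q \<in> C" "d/3 > 0" using that NetC assms(2) by auto
    then have "\<exists>k. creach f C (d/3) p q k" using K_creach[OF assms(1)] by blast
    then show ?thesis unfolding len_def by (rule someI_ex)
  qed
  define M where "M = Max ((\<lambda>(p,q). len p q) ` (Net \<times> Net))"
  have Mle: "len p q \<le> M" if "p \<in> Net" "q \<in> Net" for p q
    unfolding M_def using Netf that by (intro Max_ge) auto
  have e2: "\<forall>a b. dist a b \<le> \<eta> \<longrightarrow> dist (f a) (f b) \<le> d/3" using e \<eta>_def by auto
  have "\<forall>u\<in>C. \<forall>w\<in>C. \<exists>k. k \<le> M \<and> creach f C d u w k"
  proof (intro ballI)
    fix u w assume uw: "u \<in> C" "w \<in> C"
    obtain p where p: "p \<in> Net" "dist p u \<le> \<eta>" using near uw(1) by blast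
    obtain q where q: "q \<in> Net" "dist q w \<le> \<eta>" using near uw(2) by blast
    have "creach f C (d/3 + d/3 + \<eta>) u w (len p q)"
      using creach_perturb[OF e2 len[OF p(1) q(1)] p(2) q(2) uw] .
    moreover have "\<eta> \<le> d/3" using \<eta>_def by simp
    then have "d/3 + d/3 + \<eta> \<le> d" by linarith
    ultimately have "creach f C d u w (len p q)" using creach_mono by blast
    then show "\<exists>k. k \<le> M \<and> creach f C d u w k" using Mle p(1) q(1) by blast
  qed
  then show ?thesis by blast
qed



lemma T0_add:
  assumes "\<forall>a\<in>T. \<forall>b\<in>T. a + b \<in> (T::nat set)" "x \<in> insert 0 T" "y \<in> insert 0 T"
  shows "x + y \<in> insert 0 T"
proof (cases "x = 0")
  case True then show ?thesis using assms(3) by simp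
next
  case False
  then have x: "x \<in> T" using assms(2) by simp
  show ?thesis
  proof (cases "y = 0")
    case True then show ?thesis using assms(2) by simp
  next
    case False
    then have "y \<in> T" using assms(3) by simp
    then show ?thesis using x assms(1) by blast
  qed
qed

lemma T0_mult:
  assumes "\<forall>a\<in>T. \<forall>b\<in>T. a + b \<in> (T::nat set)" "x \<in> insert 0 T"
  shows "q * x \<in> insert 0 T"
proof (induction q)
  case 0 then show ?case by simp
next
  case (Suc q)
  have "Suc q * x = x + q * x" by simp
  then show ?case using T0_add[OF assms(1) assms(2) Suc.IH] by simp
qed

lemma semigroup_large:
  fixes T :: "nat set"
  assumes cl: "\<forall>a\<in>T. \<forall>b\<in>T. a + b \<in> T" and ne: "t0 \<in> T" and nz: "0 \<notin> T"
  shows "\<exists>g>0. (\<forall>t\<in>T. g dvd t) \<and> (\<exists>a b. a \<in> insert 0 T \<and> b \<in> insert 0 T \<and> a = b + g)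
         \<and> (\<exists>N. \<forall>k\<ge>N. k * g \<in> T)"
proof -
  define T0 where "T0 = insert 0 T"
  have cl0: "\<forall>a\<in>T0. \<forall>b\<in>T0. a + b \<in> T0"
  proof (intro ballI)
    fix a b assume "a \<in> T0" "b \<in> T0"
    then show "a + b \<in> T0" unfolding T0_def by (rule T0_add[OF cl])
  qed
  have mult: "q * x \<in> T0" if "x \<in> T0" for q x using that unfolding T0_def by (rule T0_mult[OF cl])
  define P where "P = (\<lambda>d. d > 0 \<and> (\<exists>a\<in>T0. \<exists>b\<in>T0. a = b + d))"
  have "t0 > 0" using ne nz by (cases t0) auto
  then have "P t0" unfolding P_def T0_def using ne by auto
  then have Pg: "P (LEAST d. P d)" by (rule LeastI)
  define g where "g = (LEAST d. P d)"
  have g0: "g > 0" using Pg unfolding P_def g_def by blast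
  obtain a b where ab: "a \<in> T0" "b \<in> T0" "a = b + g" using Pg unfolding P_def g_def by blast
  have dv: "g dvd t" if t: "t \<in> T" for t
  proof -
    define q where "q = t div g"
    define r where "r = t mod g"
    have tq: "t = q * g + r" unfolding q_def r_def by simp
    have rg: "r < g" unfolding r_def using g0 by simp
    have "r = 0"
    proof (rule ccontr)
      assume "r \<noteq> 0"
      have "t + q * b \<in> T0" using cl0 mult[OF ab(2)] t T0_def by blast
      moreover have "q * a \<in> T0" using mult[OF ab(1)] .
      moreover have "t + q * b = q * a + r" using tq ab(3) by (simp add: algebra_simps)
      ultimately have "P r" unfolding P_def using \<open>r \<noteq> 0\<close> by blast
      then have "g \<le> r" unfolding g_def by (rule Least_le)
      then show False using rg by simp
    qed
    then show ?thesis using tq by simp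
  qed
  have large: "\<exists>N. \<forall>k\<ge>N. k * g \<in> T"
  proof (cases "b = 0")
    case True
    then have "g \<in> T" using ab g0 unfolding T0_def by auto
    have "Suc k * g \<in> T" for k
    proof (induction k)
      case 0 then show ?case using \<open>g \<in> T\<close> by simp
    next
      case (Suc k)
      have "Suc (Suc k) * g = g + Suc k * g" by simp
      moreover have "g + Suc k * g \<in> T" using cl Suc.IH \<open>g \<in> T\<close> by blast
      ultimately show ?case by simp
    qed
    have "\<forall>k\<ge>1. k * g \<in> T"
    proof (intro allI impI)
      fix k :: nat assume "k \<ge> 1"
      then obtain j where "k = Suc j" by (cases k) auto
      then show "k * g \<in> T" using \<open>\<And>k. Suc k * g \<in> T\<close> by simp
    qed
    then show ?thesis by blast
  next
    case False
    then have bT: "b \<in> T" using ab(2) unfolding T0_def by simp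
    obtain B where "b = g * B" using dv[OF bT] by (rule dvdE)
    then have B: "b = B * g" by simp
    have B1: "B \<ge> 1" using False B by (cases B) auto
    have "k * g \<in> T" if k: "k \<ge> B * B" for k
    proof -
      define q where "q = k div B"
      define r where "r = k mod B"
      have kq: "k = q * B + r" unfolding q_def r_def by simp
      have rB: "r < B" unfolding r_def using B1 by simp
      have "B * B div B \<le> k div B" using k by (rule div_le_mono)
      then have qB: "B \<le> q" unfolding q_def using B1 by simp
      have eq: "k * g = (q - r) * b + r * a"
      proof -
        have "(q - r) * b + r * a = (q - r) * b + r * b + r * g" using ab(3) by (simp add: algebra_simps)
        also have "\<dots> = q * b + r * g" using qB rB by (simp add: add_mult_distrib[symmetric])
        also have "\<dots> = k * g" using kq B by (simp add: algebra_simps)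
        finally show ?thesis by simp
      qed
      have "(q - r) * b + r * a \<in> T0" using cl0 mult ab by blast
      moreover have "k * g > 0" using k B1 g0 by (simp add: dual_order.strict_trans1)
      ultimately show ?thesis using eq unfolding T0_def by auto
    qed
    then show ?thesis by blast
  qed
  show ?thesis using g0 dv ab large unfolding T0_def by blast
qed



lemma cyc_large:
  assumes "K f C" "d > 0" "x0 \<in> C"
  shows "\<exists>N. \<forall>k\<ge>N. creach f C d x0 x0 (k * period f C d)"
proof -
  define T where "T = {k. creach f C d x0 x0 k}"
  have cl: "\<forall>a\<in>T. \<forall>b\<in>T. a + b \<in> T" unfolding T_def using creach_trans by blast
  obtain t0 where t0: "t0 \<in> T" using K_creach[OF assms(1,3,3,2)] unfolding T_def by blast
  have nz: "0 \<notin> T" unfolding T_def using creach_pos by fastforce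
  obtain g where g: "g > 0" "\<forall>t\<in>T. g dvd t" "\<exists>a b. a \<in> insert 0 T \<and> b \<in> insert 0 T \<and> a = b + g"
    "\<exists>N. \<forall>k\<ge>N. k * g \<in> T"
    using semigroup_large[OF cl t0 nz] by blast
  have "g dvd period f C d" unfolding period_def
  proof (rule Gcd_greatest)
    fix c assume "c \<in> {k. \<exists>\<xi>. dchain_on f C d \<xi> k \<and> \<xi> 0 = \<xi> k}"
    then obtain \<xi> where x: "dchain_on f C d \<xi> c" "\<xi> 0 = \<xi> c" by blast
    then have cv: "creach f C d (\<xi> 0) (\<xi> 0) c" unfolding creach_def by metis
    have v: "\<xi> 0 \<in> C" using creach_in[OF cv] by blast
    obtain t1 where t1: "creach f C d x0 (\<xi> 0) t1" using K_creach[OF assms(1,3) v assms(2)] by blast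
    obtain t2 where t2: "creach f C d (\<xi> 0) x0 t2" using K_creach[OF assms(1) v assms(3,2)] by blast
    have "t1 + t2 \<in> T" unfolding T_def using creach_trans[OF t1 t2] by blast
    moreover have "t1 + c + t2 \<in> T" unfolding T_def using creach_trans[OF creach_trans[OF t1 cv] t2] by blast
    ultimately have "g dvd t1 + t2" "g dvd (t1 + t2) + c" using g(2) by (simp_all add: ac_simps)
    then show "g dvd c" by (simp add: dvd_add_right_iff)
  qed
  moreover have "period f C d dvd g"
  proof -
    obtain a b where ab: "a \<in> insert 0 T" "b \<in> insert 0 T" "a = b + g" using g(3) by blast
    have "period f C d dvd a" using ab(1) period_dvd unfolding T_def by auto
    moreover have "period f C d dvd b" using ab(2) period_dvd unfolding T_def by auto
    ultimately show ?thesis using ab(3) by (simp add: dvd_add_right_iff)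
  qed
  ultimately have "g = period f C d" by (rule dvd_antisym)
  then show ?thesis using g(4) unfolding T_def by auto
qed

lemma sim_long:
  assumes "K f C" "d > 0"
  shows "\<exists>N. \<forall>u w L. sim_delta f C d u w \<and> N \<le> L \<and> period f C d dvd L \<longrightarrow> creach f C d u w L"
proof (cases "C = {}")
  case True then show ?thesis unfolding sim_iff by blast
next
  case False
  then obtain x0 where x0: "x0 \<in> C" by blast
  define m where "m = period f C d"
  have m0: "m > 0" using period_pos[OF assms(1) x0 assms(2)] m_def by simp
  obtain N0 where N0: "\<forall>k\<ge>N0. creach f C d x0 x0 (k * m)" using cyc_large[OF assms x0] m_def by blast
  obtain M where M: "\<forall>u\<in>C. \<forall>w\<in>C. \<exists>k. k \<le> M \<and> creach f C d u w k" using uniform_bound[OF assms] by blast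
  define N1 where "N1 = max N0 1"
  have "creach f C d u w L" if H: "sim_delta f C d u w" "m * (N1 + 2 * M) \<le> L" "m dvd L" for u w L
  proof -
    have uw: "u \<in> C" "w \<in> C" using H(1) unfolding sim_iff by blast+
    obtain a1 where a1: "a1 \<le> M" "creach f C d u x0 a1" using M uw x0 by blast
    obtain a2 where a2: "a2 \<le> M" "creach f C d x0 w a2" using M uw x0 by blast
    have "m dvd a1 + a2" using sim_len[OF assms H(1) creach_trans[OF a1(2) a2(2)]] m_def by simp
    then obtain s where s: "a1 + a2 = m * s" by (rule dvdE)
    obtain l where l: "L = m * l" using H(3) by (rule dvdE)
    have "m * s \<le> 2 * M" using s a1(1) a2(1) by simp
    moreover have "s \<le> m * s" using m0 by simp
    ultimately have s2: "s \<le> 2 * M" by linarith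
    have "m * (N1 + 2 * M) \<le> m * l" using H(2) l by simp
    then have "N1 + 2 * M \<le> l" using m0 by simp
    then have ls: "N1 \<le> l - s" using s2 by linarith
    then have "N0 \<le> l - s" unfolding N1_def by simp
    then have cyc: "creach f C d x0 x0 ((l - s) * m)" using N0 by blast
    have "creach f C d u w (a1 + (l - s) * m + a2)" using creach_trans[OF creach_trans[OF a1(2) cyc] a2(2)] .
    moreover have "a1 + (l - s) * m + a2 = L"
    proof -
      have "s \<le> l" using ls N1_def by linarith
      then have "(l - s) * m + m * s = m * l" by (simp add: algebra_simps diff_mult_distrib2 le_add_diff_inverse)
      then show ?thesis using s l by simp
    qed
    ultimately show ?thesis by simp
  qed
  then show ?thesis unfolding m_def by blast
qed



lemma Vs_D: "y \<in> Vs f C D \<Longrightarrow> b > 0 \<Longrightarrow> y \<in> Ws f C \<and> (\<lambda>i. infdist ((f ^^ i) y) ((f ^^ i) ` D_delta f C b D)) \<longlonglongrightarrow> 0"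
  unfolding Vs_def by blast

lemma ev_small:
  assumes "(X :: nat \<Rightarrow> real) \<longlonglongrightarrow> 0" "r > 0"
  shows "\<exists>I. \<forall>n\<ge>I. X n < r"
proof -
  obtain I where "\<forall>n\<ge>I. dist (X n) 0 < r" using metric_LIMSEQ_D[OF assms] by blast
  then have "\<forall>n\<ge>I. X n < r"
  proof (intro allI impI)
    fix n assume "\<forall>n\<ge>I. dist (X n) 0 < r" "n \<ge> I"
    then have "\<bar>X n\<bar> < r" by (simp add: dist_real_def)
    then show "X n < r" by linarith
  qed
  then show ?thesis by blast
qed

lemma shadow_to:
  assumes K: "K f C" and DC: "D \<in> Dclasses f C" and sl: "s_limit_shadowing f"
    and y: "y \<in> Vs f C D" and a: "a \<in> Vs f C D" and \<epsilon>: "\<epsilon> > 0"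
  shows "\<exists>x. dist x y < \<epsilon> \<and> (\<lambda>i. dist ((f ^^ i) x) ((f ^^ i) a)) \<longlonglongrightarrow> 0"
proof -
  have cpt: "compact (UNIV :: 'a set)" and cont: "continuous_on UNIV f" using K K_def by blast+
  obtain \<delta>0 where d0: "\<delta>0 > 0" and shadow: "\<forall>\<xi> :: nat \<Rightarrow> 'a.
       (\<forall>i. dist (f (\<xi> i)) (\<xi> (Suc i)) \<le> \<delta>0) \<and>
       (\<lambda>i. dist (f (\<xi> i)) (\<xi> (Suc i))) \<longlonglongrightarrow> 0 \<longrightarrow>
       (\<exists>x. (\<forall>i. dist ((f ^^ i) x) (\<xi> i) \<le> \<epsilon>/2) \<and>
            (\<lambda>i. dist ((f ^^ i) x) (\<xi> i)) \<longlonglongrightarrow> 0)"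
    using sl \<epsilon> unfolding s_limit_shadowing_def by (meson half_gt_zero)
  define \<beta> where "\<beta> = \<delta>0/3"
  have \<beta>: "\<beta> > 0" using d0 \<beta>_def by simp
  obtain e where e: "e > 0" "\<forall>a b. dist a b \<le> e \<longrightarrow> dist (f a) (f b) \<le> \<delta>0/3"
    using ucont[OF cpt cont, of "\<delta>0/3"] d0 by auto
  define \<eta> where "\<eta> = min e (\<delta>0/3)"
  have \<eta>: "\<eta> > 0" using e d0 \<eta>_def by simp
  have e2: "\<forall>a b. dist a b \<le> \<eta> \<longrightarrow> dist (f a) (f b) \<le> \<delta>0/3" using e \<eta>_def by auto
  obtain x0 where x0: "x0 \<in> C" "x0 \<in> D" "\<And>d. d > 0 \<Longrightarrow> D_delta f C d D = {y. sim_delta f C d x0 y}"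
    using Ddelta_eq[OF K DC] by blast
  define E where "E = D_delta f C \<beta> D"
  have E: "E = {y. sim_delta f C \<beta> x0 y}" using x0(3)[OF \<beta>] E_def by simp
  have x0E: "x0 \<in> E" using E sim_refl[OF K \<beta> x0(1)] by simp
  obtain N where N: "\<forall>u w L. sim_delta f C \<beta> u w \<and> N \<le> L \<and> period f C \<beta> dvd L \<longrightarrow> creach f C \<beta> u w L"
    using sim_long[OF K \<beta>] by blast
  define m where "m = period f C \<beta>"
  have m0: "m > 0" using period_pos[OF K x0(1) \<beta>] m_def by simp
  define L where "L = m * (N + 1)"
  have "1 * N \<le> m * N" using m0 by (intro mult_le_mono1) simp
  then have "N \<le> m * N" by simp
  then have "N \<le> m * N + m" by linarith
  then have L: "N \<le> L" "m dvd L" "L \<ge> 1" using m0 unfolding L_def by (simp_all add: distrib_left)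
  have ly: "(\<lambda>i. infdist ((f ^^ i) y) ((f ^^ i) ` E)) \<longlonglongrightarrow> 0" using Vs_D[OF y \<beta>] E_def by simp
  have la: "(\<lambda>i. infdist ((f ^^ i) a) ((f ^^ i) ` E)) \<longlonglongrightarrow> 0" using Vs_D[OF a \<beta>] E_def by simp
  obtain I1 where I1: "\<forall>n\<ge>I1. infdist ((f ^^ n) y) ((f ^^ n) ` E) < \<eta>" using ev_small[OF ly \<eta>] by blast
  obtain I2 where I2: "\<forall>n\<ge>I2. infdist ((f ^^ n) a) ((f ^^ n) ` E) < \<eta>" using ev_small[OF la \<eta>] by blast
  define i where "i = max I1 I2"
  define t where "t = i + L"
  have ne: "(f ^^ n) ` E \<noteq> {}" for n using x0E by blast
  obtain zp where zp: "zp \<in> (f ^^ i) ` E" "dist ((f ^^ i) y) zp < \<eta>"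
    using infdist_lessE[OF ne] I1 i_def by (meson max.cobounded1)
  then obtain p where p: "p \<in> E" "zp = (f ^^ i) p" by blast
  obtain zq where zq: "zq \<in> (f ^^ t) ` E" "dist ((f ^^ t) a) zq < \<eta>"
    using infdist_lessE[OF ne] I2 i_def t_def by (meson max.cobounded2 trans_le_add1)
  then obtain q where q: "q \<in> E" "zq = (f ^^ t) q" by blast
  define u where "u = (f ^^ i) p"
  define w where "w = (f ^^ t) q"
  have w: "w = (f ^^ L) ((f ^^ i) q)" unfolding w_def t_def by (simp add: funpow_add add.commute)
  have spq: "sim_delta f C \<beta> p q"
  proof -
    have "sim_delta f C \<beta> x0 p" "sim_delta f C \<beta> x0 q" using p q E by auto
    then show ?thesis using sim_sym[OF K \<beta>] sim_trans by blast
  qed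
  have s1: "sim_delta f C \<beta> u ((f ^^ i) q)" using sim_fn[OF K \<beta> spq] u_def by simp
  have "(f ^^ i) q \<in> C" using s1 unfolding sim_iff by blast
  then have s2: "sim_delta f C \<beta> ((f ^^ i) q) w" using sim_orbit[OF K \<beta> _ L(2)[unfolded m_def]] w by simp
  have "creach f C \<beta> u w L" using N sim_trans[OF s1 s2] L m_def by blast
  then obtain \<zeta> where z: "dchain f \<beta> \<zeta> L" "\<zeta> 0 = u" "\<zeta> L = w"
    unfolding creach_def dchain_on_def by blast
  define \<xi> where "\<xi> = (\<lambda>s. if s \<le> i then (f ^^ s) y else if s < t then \<zeta> (s - i) else (f ^^ s) a)"
  have close: "\<forall>j\<le>L. dist (\<zeta> j) (\<xi> (i + j)) \<le> \<eta>"
  proof (intro allI impI)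
    fix j assume j: "j \<le> L"
    show "dist (\<zeta> j) (\<xi> (i + j)) \<le> \<eta>"
    proof (cases "j = 0")
      case True
      then show ?thesis using z(2) zp p u_def \<xi>_def by (simp add: dist_commute)
    next
      case False
      show ?thesis
      proof (cases "j = L")
        case True
        then have "\<xi> (i + j) = (f ^^ t) a" using False t_def \<xi>_def by simp
        then show ?thesis using True z(3) zq q w_def by (simp add: dist_commute)
      next
        case F2: False
        then have "\<xi> (i + j) = \<zeta> j" using False j t_def \<xi>_def by simp
        then show ?thesis using \<eta> by simp
      qed
    qed
  qed
  have pc: "dchain f (\<delta>0/3 + \<beta> + \<eta>) (\<lambda>j. \<xi> (i + j)) L"
    using perturb[OF z(1) close e2] .
  have bnd: "\<delta>0/3 + \<beta> + \<eta> \<le> \<delta>0" using \<beta>_def \<eta>_def by simp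
  have step: "dist (f (\<xi> s)) (\<xi> (Suc s)) \<le> \<delta>0" for s
  proof (cases "s < i")
    case True
    then show ?thesis using \<xi>_def d0 by simp
  next
    case False
    show ?thesis
    proof (cases "s < t")
      case True
      then have "s - i < L" using False t_def by simp
      then have "dist (f (\<xi> (i + (s - i)))) (\<xi> (i + Suc (s - i))) \<le> \<delta>0/3 + \<beta> + \<eta>"
        using pc unfolding dchain_def by blast
      moreover have "i + (s - i) = s" "i + Suc (s - i) = Suc s" using False by auto
      ultimately show ?thesis using bnd by simp
    next
      case F2: False
      then have "\<xi> s = (f ^^ s) a" "\<xi> (Suc s) = (f ^^ Suc s) a" using t_def \<xi>_def L(3) by auto
      then show ?thesis using d0 by simp
    qed
  qed
  have evz: "\<forall>s\<ge>t. dist (f (\<xi> s)) (\<xi> (Suc s)) = 0"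
  proof (intro allI impI)
    fix s assume "s \<ge> t"
    then have "\<xi> s = (f ^^ s) a" "\<xi> (Suc s) = (f ^^ Suc s) a" using t_def L \<xi>_def by auto
    then show "dist (f (\<xi> s)) (\<xi> (Suc s)) = 0" by simp
  qed
  have lim0: "(\<lambda>s. dist (f (\<xi> s)) (\<xi> (Suc s))) \<longlonglongrightarrow> 0"
    by (rule tendsto_eventually) (use evz in \<open>auto simp: eventually_sequentially\<close>)
  obtain x where x: "\<forall>s. dist ((f ^^ s) x) (\<xi> s) \<le> \<epsilon>/2" "(\<lambda>s. dist ((f ^^ s) x) (\<xi> s)) \<longlonglongrightarrow> 0"
    using shadow step lim0 by blast
  have "dist x y \<le> \<epsilon>/2" using x(1)[rule_format, of 0] \<xi>_def by simp
  then have "dist x y < \<epsilon>" using \<epsilon> by simp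
  moreover have "(\<lambda>s. dist ((f ^^ s) x) ((f ^^ s) a)) \<longlonglongrightarrow> 0"
  proof (rule Lim_transform_eventually[OF x(2)])
    have "\<forall>s\<ge>t. \<xi> s = (f ^^ s) a" using t_def L \<xi>_def by auto
    then show "\<forall>\<^sub>F s in sequentially. dist ((f ^^ s) x) (\<xi> s) = dist ((f ^^ s) x) ((f ^^ s) a)"
      unfolding eventually_sequentially by (intro exI[of _ t]) simp
  qed
  ultimately show ?thesis by blast
qed



lemma null_dom:
  assumes "(g :: nat \<Rightarrow> real) \<longlonglongrightarrow> 0" "dd \<longlonglongrightarrow> 0" "\<forall>i. 0 \<le> h i \<and> h i \<le> g i + dd i"
  shows "h \<longlonglongrightarrow> 0"
proof (rule tendsto_sandwich[of "\<lambda>_. 0" h sequentially "\<lambda>i. g i + dd i"])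
  show "\<forall>\<^sub>F n in sequentially. 0 \<le> h n" using assms(3) by simp
  show "\<forall>\<^sub>F n in sequentially. h n \<le> g n + dd n" using assms(3) by simp
  show "((\<lambda>_. 0) \<longlongrightarrow> (0::real)) sequentially" by simp
  show "((\<lambda>i. g i + dd i) \<longlongrightarrow> 0) sequentially" using tendsto_add_zero[OF assms(1,2)] .
qed

lemma Ws_iff: "x \<in> Ws f C \<longleftrightarrow> (\<lambda>i. infdist ((f ^^ i) x) C) \<longlonglongrightarrow> 0"
  unfolding Ws_def by simp

lemma Vs_I:
  assumes "\<And>b. b > 0 \<Longrightarrow> x \<in> Ws f C \<and> (\<lambda>i. infdist ((f ^^ i) x) ((f ^^ i) ` D_delta f C b D)) \<longlonglongrightarrow> 0"
  shows "x \<in> Vs f C D"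
  unfolding Vs_def
proof (rule INT_I)
  fix b assume "b \<in> {\<delta>::real. \<delta> > 0}"
  then have "b > 0" by simp
  then show "x \<in> {x \<in> Ws f C. (\<lambda>i. infdist ((f ^^ i) x) ((f ^^ i) ` D_delta f C b D)) \<longlonglongrightarrow> 0}"
    using assms by simp
qed

lemma asym_Vs:
  assumes a: "a \<in> Vs f C D" and l: "(\<lambda>i. dist ((f ^^ i) x) ((f ^^ i) a)) \<longlonglongrightarrow> 0"
  shows "x \<in> Vs f C D"
proof (rule Vs_I)
  fix b :: real assume b: "b > 0"
  have va: "a \<in> Ws f C" "(\<lambda>i. infdist ((f ^^ i) a) ((f ^^ i) ` D_delta f C b D)) \<longlonglongrightarrow> 0"
    using Vs_D[OF a b] by simp_all
  have h1: "\<forall>i. 0 \<le> infdist ((f ^^ i) x) C \<and> infdist ((f ^^ i) x) C \<le> infdist ((f ^^ i) a) C + dist ((f ^^ i) x) ((f ^^ i) a)"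
    by (intro allI conjI infdist_nonneg infdist_triangle)
  have "(\<lambda>i. infdist ((f ^^ i) x) C) \<longlonglongrightarrow> 0"
    using null_dom[OF va(1)[unfolded Ws_iff] l h1] .
  then have wx: "x \<in> Ws f C" unfolding Ws_iff .
  have h2: "\<forall>i. 0 \<le> infdist ((f ^^ i) x) ((f ^^ i) ` D_delta f C b D) \<and> infdist ((f ^^ i) x) ((f ^^ i) ` D_delta f C b D) \<le> infdist ((f ^^ i) a) ((f ^^ i) ` D_delta f C b D) + dist ((f ^^ i) x) ((f ^^ i) a)"
    by (intro allI conjI infdist_nonneg infdist_triangle)
  have "(\<lambda>i. infdist ((f ^^ i) x) ((f ^^ i) ` D_delta f C b D)) \<longlonglongrightarrow> 0"
    using null_dom[OF va(2) l h2] .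
  then show "x \<in> Ws f C \<and> (\<lambda>i. infdist ((f ^^ i) x) ((f ^^ i) ` D_delta f C b D)) \<longlonglongrightarrow> 0"
    using wx by simp
qed

lemma aux1: "(\<delta>::real) < D \<Longrightarrow> D \<le> a + X + b \<Longrightarrow> a < (\<delta> - r)/2 \<Longrightarrow> b < (\<delta> - r)/2 \<Longrightarrow> r < X"
  by argo

lemma aux2: "(D::real) < e/2 \<Longrightarrow> X \<le> a + D + b \<Longrightarrow> a < e/4 \<Longrightarrow> b < e/4 \<Longrightarrow> X < e"
  by argo

lemma unif_small:
  fixes n :: nat
  assumes "\<forall>j<n. (dv j :: nat \<Rightarrow> real) \<longlonglongrightarrow> 0" "c > 0"
  shows "\<exists>I. \<forall>i\<ge>I. \<forall>j<n. dv j i < c"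
proof -
  have ev: "\<forall>j\<in>{..<n}. eventually (\<lambda>i. dv j i < c) sequentially"
  proof
    fix j assume "j \<in> {..<n}"
    then have "dv j \<longlonglongrightarrow> 0" using assms(1) by simp
    then show "eventually (\<lambda>i. dv j i < c) sequentially" by (rule order_tendstoD(2)[OF _ assms(2)])
  qed
  have "eventually (\<lambda>i. \<forall>j\<in>{..<n}. dv j i < c) sequentially"
    by (rule eventually_ball_finite[where A="{..<n}" and P="\<lambda>i j. dv j i < c"]) (simp_all add: ev)
  then obtain I where "\<forall>i\<ge>I. \<forall>j\<in>{..<n}. dv j i < c" unfolding eventually_sequentially by blast
  then show ?thesis by auto
qed

theorem theorem1p2:
  fixes f :: "'a::metric_space \<Rightarrow> 'a"
    and C D :: "'a set" and \<F> \<G> :: "nat set set" and n :: nat and \<delta> :: real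
    and a :: "nat \<Rightarrow> 'a"
  assumes "compact (UNIV :: 'a set)"
    and "continuous_on UNIV f"
    and "s_limit_shadowing f"
    and "C \<in> chain_components f"
    and "D \<in> Dclasses f C"
    and "full_family \<F>" and "full_family \<G>"
    and "n \<ge> 2" and "\<delta> > 0"
    and "\<forall>j<n. a j \<in> Vs f C D"
    and "scrambled f \<F> \<G> n \<delta> a"
  shows "\<forall>r. 0 < r \<and> r < \<delta> \<longrightarrow> dense_chaotic f \<F> \<G> n r (Vs f C D)"
proof (intro allI impI)
  fix r assume r: "0 < r \<and> r < \<delta>"
  have K: "K f C" using assms(1,2,4) K_def by blast
  have "0 < n" using assms(8) by simp
  then have ne: "Vs f C D \<noteq> {}" using assms(10) by blast
  have F: "\<And>A B. A \<in> \<F> \<Longrightarrow> A \<subseteq> B \<Longrightarrow> B \<in> \<F>" "\<And>A I. A \<in> \<F> \<Longrightarrow> {i \<in> A. i \<ge> I} \<in> \<F>"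
    using assms(6) unfolding full_family_def furstenberg_family_def by blast+
  have G: "\<And>A B. A \<in> \<G> \<Longrightarrow> A \<subseteq> B \<Longrightarrow> B \<in> \<G>" "\<And>A I. A \<in> \<G> \<Longrightarrow> {i \<in> A. i \<ge> I} \<in> \<G>"
    using assms(7) unfolding full_family_def furstenberg_family_def by blast+
  have sa: "S_set f n a \<delta> \<in> \<F>" "\<And>e. e > 0 \<Longrightarrow> T_set f n a e \<in> \<G>"
    using assms(11) unfolding scrambled_def by blast+
  have "\<forall>\<epsilon>>0. \<exists>x. (\<forall>j<n. x j \<in> Vs f C D \<and> dist (x j) (y j) < \<epsilon>) \<and> scrambled f \<F> \<G> n r x"
    if y: "\<forall>j<n. y j \<in> Vs f C D" for y
  proof (intro allI impI)
    fix \<epsilon> :: real assume \<epsilon>: "\<epsilon> > 0"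
    have "\<forall>j. \<exists>x. j < n \<longrightarrow> x \<in> Vs f C D \<and> dist x (y j) < \<epsilon> \<and> (\<lambda>i. dist ((f ^^ i) x) ((f ^^ i) (a j))) \<longlonglongrightarrow> 0"
    proof
      fix j
      show "\<exists>x. j < n \<longrightarrow> x \<in> Vs f C D \<and> dist x (y j) < \<epsilon> \<and> (\<lambda>i. dist ((f ^^ i) x) ((f ^^ i) (a j))) \<longlonglongrightarrow> 0"
      proof (cases "j < n")
        case True
        obtain x where x: "dist x (y j) < \<epsilon>" "(\<lambda>i. dist ((f ^^ i) x) ((f ^^ i) (a j))) \<longlonglongrightarrow> 0"
          using shadow_to[OF K assms(5,3), of "y j" "a j" \<epsilon>] y assms(10) True \<epsilon> by blast
        then show ?thesis using asym_Vs[OF _ x(2)] assms(10) True by blast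
      qed simp
    qed
    from choice[OF this] obtain xs where xs: "\<forall>j<n. xs j \<in> Vs f C D \<and> dist (xs j) (y j) < \<epsilon> \<and> (\<lambda>i. dist ((f ^^ i) (xs j)) ((f ^^ i) (a j))) \<longlonglongrightarrow> 0"
      by blast
    have dv: "\<forall>j<n. (\<lambda>i. dist ((f ^^ i) (xs j)) ((f ^^ i) (a j))) \<longlonglongrightarrow> 0" using xs by blast
    have tri: "dist ((f ^^ i) (a j)) ((f ^^ i) (a k)) \<le> dist ((f ^^ i) (xs j)) ((f ^^ i) (a j)) + dist ((f ^^ i) (xs j)) ((f ^^ i) (xs k)) + dist ((f ^^ i) (xs k)) ((f ^^ i) (a k))"
      and tri2: "dist ((f ^^ i) (xs j)) ((f ^^ i) (xs k)) \<le> dist ((f ^^ i) (xs j)) ((f ^^ i) (a j)) + dist ((f ^^ i) (a j)) ((f ^^ i) (a k)) + dist ((f ^^ i) (xs k)) ((f ^^ i) (a k))"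
      for i j k
    proof -
      have "dist ((f ^^ i) (a j)) ((f ^^ i) (a k)) \<le> dist ((f ^^ i) (a j)) ((f ^^ i) (xs j)) + dist ((f ^^ i) (xs j)) ((f ^^ i) (a k))"
        by (rule dist_triangle)
      moreover have "dist ((f ^^ i) (xs j)) ((f ^^ i) (a k)) \<le> dist ((f ^^ i) (xs j)) ((f ^^ i) (xs k)) + dist ((f ^^ i) (xs k)) ((f ^^ i) (a k))"
        by (rule dist_triangle)
      ultimately show "dist ((f ^^ i) (a j)) ((f ^^ i) (a k)) \<le> dist ((f ^^ i) (xs j)) ((f ^^ i) (a j)) + dist ((f ^^ i) (xs j)) ((f ^^ i) (xs k)) + dist ((f ^^ i) (xs k)) ((f ^^ i) (a k))"
        by (simp add: dist_commute)
      have "dist ((f ^^ i) (xs j)) ((f ^^ i) (xs k)) \<le> dist ((f ^^ i) (xs j)) ((f ^^ i) (a j)) + dist ((f ^^ i) (a j)) ((f ^^ i) (xs k))"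
        by (rule dist_triangle)
      moreover have "dist ((f ^^ i) (a j)) ((f ^^ i) (xs k)) \<le> dist ((f ^^ i) (a j)) ((f ^^ i) (a k)) + dist ((f ^^ i) (a k)) ((f ^^ i) (xs k))"
        by (rule dist_triangle)
      ultimately show "dist ((f ^^ i) (xs j)) ((f ^^ i) (xs k)) \<le> dist ((f ^^ i) (xs j)) ((f ^^ i) (a j)) + dist ((f ^^ i) (a j)) ((f ^^ i) (a k)) + dist ((f ^^ i) (xs k)) ((f ^^ i) (a k))"
        by (simp add: dist_commute)
    qed
    have "S_set f n xs r \<in> \<F>"
    proof -
      have c: "(\<delta> - r)/2 > 0" using r by simp
      obtain I where I: "\<forall>i\<ge>I. \<forall>j<n. dist ((f ^^ i) (xs j)) ((f ^^ i) (a j)) < (\<delta> - r)/2"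
        using unif_small[OF dv c] by blast
      have "{i \<in> S_set f n a \<delta>. i \<ge> I} \<subseteq> S_set f n xs r"
      proof
        fix i assume i: "i \<in> {i \<in> S_set f n a \<delta>. i \<ge> I}"
        show "i \<in> S_set f n xs r" unfolding S_set_def
        proof (intro CollectI allI impI)
          fix j k assume jk: "j < k \<and> k < n"
          have "dist ((f ^^ i) (a j)) ((f ^^ i) (a k)) > \<delta>" using i jk unfolding S_set_def by blast
          moreover have "dist ((f ^^ i) (xs j)) ((f ^^ i) (a j)) < (\<delta> - r)/2"
            "dist ((f ^^ i) (xs k)) ((f ^^ i) (a k)) < (\<delta> - r)/2" using I i jk by auto
          ultimately show "dist ((f ^^ i) (xs j)) ((f ^^ i) (xs k)) > r" using tri[of i j k] aux1 by blast
        qed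
      qed
      moreover have "{i \<in> S_set f n a \<delta>. i \<ge> I} \<in> \<F>" using F(2)[OF sa(1)] .
      ultimately show ?thesis using F(1) by blast
    qed
    moreover have "\<forall>e>0. T_set f n xs e \<in> \<G>"
    proof (intro allI impI)
      fix e :: real assume e: "e > 0"
      show "T_set f n xs e \<in> \<G>"
    proof -
      have c: "e/4 > 0" using e by simp
      obtain I where I: "\<forall>i\<ge>I. \<forall>j<n. dist ((f ^^ i) (xs j)) ((f ^^ i) (a j)) < e/4"
        using unif_small[OF dv c] by blast
      have "{i \<in> T_set f n a (e/2). i \<ge> I} \<subseteq> T_set f n xs e"
      proof
        fix i assume i: "i \<in> {i \<in> T_set f n a (e/2). i \<ge> I}"
        show "i \<in> T_set f n xs e" unfolding T_set_def
        proof (intro CollectI allI impI)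
          fix j k assume jk: "j < k \<and> k < n"
          have "dist ((f ^^ i) (a j)) ((f ^^ i) (a k)) < e/2" using i jk unfolding T_set_def by blast
          moreover have "dist ((f ^^ i) (xs j)) ((f ^^ i) (a j)) < e/4"
            "dist ((f ^^ i) (xs k)) ((f ^^ i) (a k)) < e/4" using I i jk by auto
          ultimately show "dist ((f ^^ i) (xs j)) ((f ^^ i) (xs k)) < e" using tri2[of i j k] aux2 by blast
        qed
      qed
      moreover have "T_set f n a (e/2) \<in> \<G>" using sa(2) e by simp
      then have "{i \<in> T_set f n a (e/2). i \<ge> I} \<in> \<G>" using G(2) by blast
      ultimately show ?thesis using G(1) by blast
    qed
    qed
    ultimately have sc: "scrambled f \<F> \<G> n r xs" unfolding scrambled_def by (rule conjI)
    have "\<forall>j<n. xs j \<in> Vs f C D \<and> dist (xs j) (y j) < \<epsilon>" using xs by simp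
    then show "\<exists>x. (\<forall>j<n. x j \<in> Vs f C D \<and> dist (x j) (y j) < \<epsilon>) \<and> scrambled f \<F> \<G> n r x"
      using sc by blast
  qed
  then show "dense_chaotic f \<F> \<G> n r (Vs f C D)" unfolding dense_chaotic_def using ne by blast
qed

end
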